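(* Let $m\ge2$ and $a_1\ge a_2\ge\cdots\ge a_m\ge1$ be integers, and set $a=\max(3,a_1)$. For $1\le i\le m$ let \[E_i=\big\{[(m-i)a]\cup\{(m-i+1)a+1,\dots,ma\}\cup\{j\} : (m-i)a+1\le j\le (m-i)a+a_i\big\},\] and let $H$ be the hypergraph on $[ma]$ with edge set $E=E_1\cup\cdots\cup E_m$. Then for $F,F'\in E$, the edge spheres $Q_F$ and $Q_{F'}$ lie in the same connected component of $\Delta_H$ if and only if $F,F'\in E_i$ for some $i$. Consequently $\Delta_H$ has exactly $m$ connected components, and for each $i$ one component is the union of the $a_i$ edge spheres $Q_F$, $F\in E_i$.
   Context: Here $[0]=\emptyset$. The coloring complex $\Delta_H$ of a hypergraph $H=([N],E)$ is the abstract simplicial complex whose vertices are the nonempty proper subsets of $[N]$ and whose faces are the chains $\emptyset\neq A_1\subsetneq\cdots\subsetneq A_l\neq[N]$ ($l\ge0$) such that, with $A_0=\emptyset$, $A_{l+1}=[N]$, some difference $A_i\setminus A_{i-1}$ contains an edge of $H$. For $F\in E$, the edge sphere $Q_F$ is the subcomplex of those faces for which some difference $A_i\setminus A_{i-1}$ contains $F$. *)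

theory Defs
  imports Main
begin

text \<open>Faces of the coloring complex are finite chains of nonempty proper subsets of [N]
  (represented as the set of their members); the differences A_i - A_{i-1} are
  taken between consecutive members of the chain extended by {} and [N].\<close>

definition is_chain_set :: "nat set set \<Rightarrow> bool" where
  "is_chain_set \<sigma> \<longleftrightarrow> (\<forall>A\<in>\<sigma>. \<forall>B\<in>\<sigma>. A \<subseteq> B \<or> B \<subseteq> A)"

text \<open>Some difference A_i - A_{i-1} of the chain (with A_0 = {}, A_(l+1) = [N]) contains F.\<close>
definition diff_contains :: "nat \<Rightarrow> nat set set \<Rightarrow> nat set \<Rightarrow> bool" where
  "diff_contains N \<sigma> F \<longleftrightarrow>
     (\<exists>B C. B \<in> insert {} \<sigma> \<and> C \<in> insert {1..N} \<sigma> \<and> B \<subset> C \<and>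
            (\<forall>D\<in>\<sigma>. \<not> (B \<subset> D \<and> D \<subset> C)) \<and> F \<subseteq> C - B)"

definition coloring_complex :: "nat \<Rightarrow> nat set set \<Rightarrow> nat set set set" where
  "coloring_complex N E =
     {\<sigma>. finite \<sigma> \<and> \<sigma> \<subseteq> {A. A \<noteq> {} \<and> A \<subset> {1..N}} \<and> is_chain_set \<sigma> \<and>
          (\<exists>F\<in>E. diff_contains N \<sigma> F)}"

definition edge_sphere :: "nat \<Rightarrow> nat set set \<Rightarrow> nat set \<Rightarrow> nat set set set" where
  "edge_sphere N E F = {\<sigma> \<in> coloring_complex N E. diff_contains N \<sigma> F}"

definition cverts :: "'v set set \<Rightarrow> 'v set" where
  "cverts K = \<Union>K"

definition cadj :: "'v set set \<Rightarrow> ('v \<times> 'v) set" where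
  "cadj K = {(v, w). \<exists>\<sigma>\<in>K. v \<in> \<sigma> \<and> w \<in> \<sigma>}"

definition components :: "'v set set \<Rightarrow> 'v set set" where
  "components K = cverts K // (cadj K)\<^sup>+"

definition same_component :: "'v set set \<Rightarrow> 'v set set \<Rightarrow> 'v set set \<Rightarrow> bool" where
  "same_component K Q Q' \<longleftrightarrow> (\<exists>C\<in>components K. cverts Q \<subseteq> C \<and> cverts Q' \<subseteq> C)"

end

theory Submission
  imports Defs
begin

lemma face_sep:
  assumes ch: "is_chain_set \<sigma>" and sub: "\<forall>D\<in>\<sigma>. D \<subseteq> {1..N}"
    and dc: "diff_contains N \<sigma> F" and D: "D \<in> \<sigma>"
  shows "F \<subseteq> D \<or> F \<inter> D = {}"
proof -
  from dc obtain B C where BC0: "B \<in> insert {} \<sigma> \<and> C \<in> insert {1..N} \<sigma> \<and> B \<subset> C \<and>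
            (\<forall>D\<in>\<sigma>. \<not> (B \<subset> D \<and> D \<subset> C)) \<and> F \<subseteq> C - B"
    unfolding diff_contains_def by (elim exE) assumption
  note B = conjunct1[OF BC0] and C = conjunct1[OF conjunct2[OF BC0]]
   and nb = conjunct1[OF conjunct2[OF conjunct2[OF conjunct2[OF BC0]]]]
   and FCB = conjunct2[OF conjunct2[OF conjunct2[OF conjunct2[OF BC0]]]]
  have DB: "D \<subseteq> B \<or> B \<subseteq> D"
  proof (cases "B = {}")
    case False
    then have "B \<in> \<sigma>" using B by simp
    then show ?thesis using ch D unfolding is_chain_set_def by blast
  qed simp
  have DC: "D \<subseteq> C \<or> C \<subseteq> D"
  proof (cases "C = {1..N}")
    case False
    then have "C \<in> \<sigma>" using C by simp
    then show ?thesis using ch D unfolding is_chain_set_def by blast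
  qed (use sub D in simp)
  have "D \<subseteq> B \<or> C \<subseteq> D"
  proof (rule ccontr)
    assume "\<not> (D \<subseteq> B \<or> C \<subseteq> D)"
    then have "B \<subset> D" "D \<subset> C" using DB DC by auto
    then show False using nb D by blast
  qed
  then show ?thesis using FCB by auto
qed


lemma dcI:
  assumes "B \<in> insert {} \<sigma>" "C \<in> insert {1..N} \<sigma>" "B \<subset> C"
    "\<And>D. D \<in> \<sigma> \<Longrightarrow> \<not> (B \<subset> D \<and> D \<subset> C)" "F \<subseteq> C - B"
  shows "diff_contains N \<sigma> F"
  unfolding diff_contains_def
  apply (rule exI[of _ B], rule exI[of _ C])
  apply (intro conjI ballI)
  using assms by simp_all

lemma single_face:
  assumes v: "v \<noteq> {}" "v \<subset> {1..N}" and F: "F \<in> E" and FF: "F \<subseteq> v \<or> F \<subseteq> {1..N} - v"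
  shows "{v} \<in> coloring_complex N E" "diff_contains N {v} F"
proof -
  show dc: "diff_contains N {v} F"
  proof (cases "F \<subseteq> v")
    case True
    show ?thesis by (rule dcI[of "{}" _ v]) (use True v in auto)
  next
    case False
    show ?thesis by (rule dcI[of v _ "{1..N}"]) (use False FF v in auto)
  qed
  have "is_chain_set {v}" unfolding is_chain_set_def by blast
  moreover have "{v} \<subseteq> {A. A \<noteq> {} \<and> A \<subset> {1..N}}" using v by blast
  ultimately show "{v} \<in> coloring_complex N E"
    unfolding coloring_complex_def using F dc by blast
qed

lemma pair_face:
  assumes v: "v \<noteq> {}" "v \<subset> w" "w \<subset> {1..N}" and F: "F \<in> E"
    and FF: "F \<subseteq> v \<or> F \<subseteq> w - v \<or> F \<subseteq> {1..N} - w"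
  shows "{v, w} \<in> coloring_complex N E" "diff_contains N {v,w} F"
proof -
  show dc: "diff_contains N {v,w} F"
  proof (cases "F \<subseteq> v")
    case True
    show ?thesis by (rule dcI[of "{}" _ v]) (use True v in auto)
  next
    case F1: False
    show ?thesis
    proof (cases "F \<subseteq> w - v")
      case True
      show ?thesis by (rule dcI[of v _ w]) (use True v in auto)
    next
      case False
      show ?thesis by (rule dcI[of w _ "{1..N}"]) (use False F1 FF v in auto)
    qed
  qed
  have "is_chain_set {v,w}" unfolding is_chain_set_def using v(2) by blast
  moreover have "{v,w} \<subseteq> {A. A \<noteq> {} \<and> A \<subset> {1..N}}" using v by blast
  ultimately show "{v,w} \<in> coloring_complex N E"
    unfolding coloring_complex_def using F dc by blast
qed

lemma pair_adj:
  assumes "v \<noteq> {}" "v \<subset> w" "w \<subset> {1..N}" "F \<in> E"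
    "F \<subseteq> v \<or> F \<subseteq> w - v \<or> F \<subseteq> {1..N} - w"
  shows "(v, w) \<in> cadj (coloring_complex N E)"
  using pair_face(1)[OF assms] unfolding cadj_def by blast

lemma cverts_iff:
  assumes EU: "\<forall>F\<in>E. F \<subseteq> {1..N}"
  shows "v \<in> cverts (coloring_complex N E) \<longleftrightarrow>
     v \<noteq> {} \<and> v \<subset> {1..N} \<and> (\<exists>F\<in>E. F \<subseteq> v \<or> F \<inter> v = {})"
proof
  assume "v \<in> cverts (coloring_complex N E)"
  then obtain \<sigma> where s: "\<sigma> \<in> coloring_complex N E" "v \<in> \<sigma>" unfolding cverts_def by blast
  then obtain F where F: "F \<in> E" "diff_contains N \<sigma> F" unfolding coloring_complex_def by blast
  have "F \<subseteq> v \<or> F \<inter> v = {}"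
    by (rule face_sep[OF _ _ F(2) s(2)]) (use s in \<open>auto simp: coloring_complex_def\<close>)
  moreover have "v \<noteq> {} \<and> v \<subset> {1..N}" using s unfolding coloring_complex_def by blast
  ultimately show "v \<noteq> {} \<and> v \<subset> {1..N} \<and> (\<exists>F\<in>E. F \<subseteq> v \<or> F \<inter> v = {})"
    using F by blast
next
  assume a: "v \<noteq> {} \<and> v \<subset> {1..N} \<and> (\<exists>F\<in>E. F \<subseteq> v \<or> F \<inter> v = {})"
  then obtain F where "F \<in> E" "F \<subseteq> v \<or> F \<subseteq> {1..N} - v" using EU by blast
  from single_face(1)[OF _ _ this] a show "v \<in> cverts (coloring_complex N E)"
    unfolding cverts_def by blast
qed



locale hyp =
  fixes N :: nat and I :: "nat set" and Ei :: "nat \<Rightarrow> nat set set"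
    and R Bk J :: "nat \<Rightarrow> nat set" and E :: "nat set set"
  assumes E_eq: "E = (\<Union>i\<in>I. Ei i)"
  and Ei_eq: "\<And>i. i\<in>I \<Longrightarrow> Ei i = (\<lambda>j. insert j (R i)) ` J i"
  and RB_un: "\<And>i. i\<in>I \<Longrightarrow> R i \<union> Bk i = {1..N}"
  and RB_dis: "\<And>i. i\<in>I \<Longrightarrow> R i \<inter> Bk i = {}"
  and J_sub: "\<And>i. i\<in>I \<Longrightarrow> J i \<subseteq> Bk i"
  and J_ne: "\<And>i. i\<in>I \<Longrightarrow> J i \<noteq> {}"
  and Bk_fin: "\<And>i. i\<in>I \<Longrightarrow> finite (Bk i)"
  and Bk_card: "\<And>i. i\<in>I \<Longrightarrow> card (Bk i) \<ge> 3"
  and Bk_R: "\<And>i i'. i\<in>I \<Longrightarrow> i'\<in>I \<Longrightarrow> i\<noteq>i' \<Longrightarrow> Bk i \<subseteq> R i'"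
  and I_fin: "finite I"
begin

definition has :: "nat \<Rightarrow> nat set \<Rightarrow> bool" where
  "has i v \<longleftrightarrow> (\<exists>F\<in>Ei i. F \<subseteq> v \<or> F \<inter> v = {})"

definition T :: "nat \<Rightarrow> nat set set" where
  "T i = {v. v \<noteq> {} \<and> v \<subset> {1..N} \<and> has i v}"

abbreviation "K \<equiv> coloring_complex N E"
abbreviation "r \<equiv> cadj K"

lemma E_sub: "F \<in> E \<Longrightarrow> F \<subseteq> {1..N}"
  using E_eq Ei_eq RB_un J_sub by fastforce

lemma E_has: "i \<in> I \<Longrightarrow> F \<in> Ei i \<Longrightarrow> has i F"
  unfolding has_def by blast

lemma cv: "v \<in> cverts K \<longleftrightarrow> (\<exists>i\<in>I. v \<in> T i)"
  using cverts_iff[of E N v] E_sub unfolding T_def has_def E_eq by blast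

lemma uniq:
  assumes i: "i \<in> I" "i' \<in> I" and v: "v \<noteq> {}" "v \<subset> {1..N}" and h: "has i v" "has i' v"
  shows "i = i'"
proof (rule ccontr)
  assume ne: "i \<noteq> i'"
  obtain F where F: "F \<in> Ei i" "F \<subseteq> v \<or> F \<inter> v = {}" using h(1) unfolding has_def by blast
  obtain F' where F': "F' \<in> Ei i'" "F' \<subseteq> v \<or> F' \<inter> v = {}" using h(2) unfolding has_def by blast
  obtain j where j: "j \<in> J i" "F = insert j (R i)" using F(1) Ei_eq[OF i(1)] by blast
  obtain j' where j': "j' \<in> J i'" "F' = insert j' (R i')" using F'(1) Ei_eq[OF i(2)] by blast
  have jF': "j \<in> F'" using j' Bk_R[OF i ne] J_sub[OF i(1)] j(1) by blast
  have jF: "j \<in> F" using j by blast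
  have un: "{1..N} \<subseteq> F \<union> F'" using RB_un[OF i(1)] Bk_R[OF i ne] j j' by blast
  show False
    using F(2) F'(2) jF jF' un v by blast
qed

lemma K_face:
  assumes "\<sigma> \<in> K" "v \<in> \<sigma>"
  shows "v \<noteq> {} \<and> v \<subset> {1..N}"
  using assms unfolding coloring_complex_def by blast

lemma adj_has:
  assumes vw: "(v, w) \<in> r" and i: "i \<in> I" and h: "has i v"
  shows "has i w"
proof -
  obtain \<sigma> where s: "\<sigma> \<in> K" "v \<in> \<sigma>" "w \<in> \<sigma>" using vw unfolding cadj_def by blast
  then obtain F where F: "F \<in> E" "diff_contains N \<sigma> F" unfolding coloring_complex_def by blast
  obtain i0 where i0: "i0 \<in> I" "F \<in> Ei i0" using F(1) E_eq by blast
  have ch: "is_chain_set \<sigma>" "\<forall>D\<in>\<sigma>. D \<subseteq> {1..N}" using s(1) unfolding coloring_complex_def by auto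
  have "has i0 v" using face_sep[OF ch F(2) s(2)] i0 unfolding has_def by blast
  moreover have "has i0 w" using face_sep[OF ch F(2) s(3)] i0 unfolding has_def by blast
  ultimately show ?thesis using uniq[OF i i0(1)] K_face[OF s(1,2)] h by blast
qed

lemma trancl_has:
  assumes "(v, w) \<in> r\<^sup>+" and "i \<in> I" and "has i v"
  shows "has i w"
  using assms by (induction rule: trancl_induct) (auto intro: adj_has)

lemma r_sym: "sym r"
  unfolding cadj_def sym_def by blast

lemma r_refl: "v \<in> cverts K \<Longrightarrow> (v, v) \<in> r"
  unfolding cadj_def cverts_def by blast

end

context hyp begin

lemma rt_sym: "(a, b) \<in> r\<^sup>* \<Longrightarrow> (b, a) \<in> r\<^sup>*"
proof -
  assume "(a, b) \<in> r\<^sup>*"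
  then have "(b, a) \<in> (r\<inverse>)\<^sup>*" by (rule rtrancl_converseI)
  moreover have "r\<inverse> = r" using r_sym by (simp add: sym_conv_converse_eq)
  ultimately show ?thesis by simp
qed

lemma three: "finite B \<Longrightarrow> card B \<ge> 3 \<Longrightarrow> \<exists>k\<in>B. k \<noteq> x \<and> k \<noteq> y"
proof (rule ccontr)
  assume f: "finite B" "card B \<ge> 3" "\<not> (\<exists>k\<in>B. k \<noteq> x \<and> k \<noteq> y)"
  then have "B \<subseteq> {x, y}" by blast
  then have "card B \<le> card {x, y}" by (rule card_mono[rotated]) simp
  also have "\<dots> \<le> 2" by (simp add: card_insert_if)
  finally show False using f by simp
qed

lemma two: "finite B \<Longrightarrow> card B \<ge> 2 \<Longrightarrow> \<exists>k\<in>B. k \<noteq> x"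
proof (rule ccontr)
  assume f: "finite B" "card B \<ge> 2" "\<not> (\<exists>k\<in>B. k \<noteq> x)"
  then have "B \<subseteq> {x}" by blast
  then have "card B \<le> card {x}" by (rule card_mono[rotated]) simp
  then show False using f by simp
qed

lemma Fj_props:
  assumes i: "i \<in> I" and j: "j \<in> J i"
  shows "insert j (R i) \<noteq> {}" "insert j (R i) \<subset> {1..N}" "insert j (R i) \<in> E"
    "insert j (R i) \<in> Ei i"
proof -
  show "insert j (R i) \<noteq> {}" by simp
  show E1: "insert j (R i) \<in> Ei i" using Ei_eq[OF i] j by blast
  then show "insert j (R i) \<in> E" using E_eq i by blast
  have "\<exists>k\<in>Bk i. k \<noteq> j" using three[OF Bk_fin[OF i] Bk_card[OF i], of j j] by blast
  then obtain k where "k \<in> Bk i" "k \<noteq> j" by blast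
  moreover have "k \<notin> R i" using RB_dis[OF i] \<open>k \<in> Bk i\<close> by blast
  moreover have "insert j (R i) \<subseteq> {1..N}" using RB_un[OF i] J_sub[OF i] j by blast
  moreover have "k \<in> {1..N}" using RB_un[OF i] \<open>k \<in> Bk i\<close> by blast
  ultimately show "insert j (R i) \<subset> {1..N}" by blast
qed

lemma big_adj:
  assumes i: "i \<in> I" and j: "j \<in> J i" and w: "insert j (R i) \<subseteq> w" "w \<subset> {1..N}"
  shows "(insert j (R i), w) \<in> r\<^sup>*"
proof (cases "w = insert j (R i)")
  case False
  have "(insert j (R i), w) \<in> r"
    by (rule pair_adj[OF Fj_props(1)[OF i j] _ w(2) Fj_props(3)[OF i j]]) (use w False in auto)
  then show ?thesis by blast
qed simp

lemma Fj_Fj0: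
  assumes i: "i \<in> I" and j: "j \<in> J i" "j0 \<in> J i"
  shows "(insert j (R i), insert j0 (R i)) \<in> r\<^sup>*"
proof -
  obtain k where k: "k \<in> Bk i" "k \<noteq> j" "k \<noteq> j0" using three[OF Bk_fin[OF i] Bk_card[OF i]] by blast
  define W where "W = insert j0 (insert j (R i))"
  have "k \<notin> W" using k RB_dis[OF i] unfolding W_def by blast
  moreover have "W \<subseteq> {1..N}" using RB_un[OF i] J_sub[OF i] j unfolding W_def by blast
  moreover have "k \<in> {1..N}" using RB_un[OF i] k by blast
  ultimately have W: "W \<subset> {1..N}" by blast
  have "(insert j (R i), W) \<in> r\<^sup>*" by (rule big_adj[OF i j(1)]) (use W in \<open>auto simp: W_def\<close>)
  moreover have "(insert j0 (R i), W) \<in> r\<^sup>*" by (rule big_adj[OF i j(2)]) (use W in \<open>auto simp: W_def\<close>)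
  ultimately show ?thesis using rt_sym by (meson rtrancl_trans)
qed

lemma small1:
  assumes i: "i \<in> I" and j: "j \<in> J i" and v: "v \<noteq> {}" "v \<inter> insert j (R i) = {}" "v \<subset> {1..N}"
    and nv: "v \<noteq> Bk i - {j}"
  shows "(v, insert j (R i)) \<in> r\<^sup>*"
proof -
  have vB: "v \<subseteq> Bk i - {j}" using v RB_un[OF i] by blast
  then obtain k where k: "k \<in> Bk i" "k \<noteq> j" "k \<notin> v" using nv by blast
  define W where "W = v \<union> insert j (R i)"
  have "k \<notin> W" using k RB_dis[OF i] unfolding W_def by blast
  moreover have "W \<subseteq> {1..N}" using RB_un[OF i] J_sub[OF i] j v unfolding W_def by blast
  moreover have "k \<in> {1..N}" using RB_un[OF i] k by blast
  ultimately have W: "W \<subset> {1..N}" by blast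
  have "(v, W) \<in> r"
    by (rule pair_adj[OF v(1) _ W Fj_props(3)[OF i j]]) (use v in \<open>auto simp: W_def\<close>)
  moreover have "(insert j (R i), W) \<in> r\<^sup>*" by (rule big_adj[OF i j]) (use W in \<open>auto simp: W_def\<close>)
  ultimately show ?thesis using rt_sym by (meson converse_rtrancl_into_rtrancl)
qed

lemma small:
  assumes i: "i \<in> I" and j: "j \<in> J i" and v: "v \<noteq> {}" "v \<inter> insert j (R i) = {}" "v \<subset> {1..N}"
  shows "(v, insert j (R i)) \<in> r\<^sup>*"
proof (cases "v = Bk i - {j}")
  case False
  then show ?thesis using small1[OF i j v] by blast
next
  case True
  have jB: "j \<in> Bk i" using J_sub[OF i] j by blast
  have cv: "card v \<ge> 2" using True Bk_card[OF i] card_Diff_singleton[OF jB] by simp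
  have fv: "finite v" using True Bk_fin[OF i] by simp
  obtain k where k: "k \<in> v" using v by blast
  obtain k' where k': "k' \<in> v" "k' \<noteq> k" using two[OF fv cv] by blast
  have kv: "{k} \<subset> v" using k k' by blast
  have FU: "insert j (R i) \<subseteq> {1..N} - v" using v(2) Fj_props(2)[OF i j] by blast
  have "({k}, v) \<in> r"
    by (rule pair_adj[OF _ kv v(3) Fj_props(3)[OF i j]]) (use FU in auto)
  then have "(v, {k}) \<in> r\<^sup>*" using rt_sym by blast
  moreover have "({k}, insert j (R i)) \<in> r\<^sup>*"
  proof (rule small1[OF i j])
    show "{k} \<noteq> Bk i - {j}" using k k' True by blast
  qed (use k v kv in auto)
  ultimately show ?thesis by (meson rtrancl_trans)
qed

lemma conn:
  assumes i: "i \<in> I" and j0: "j0 \<in> J i" and v: "v \<in> T i"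
  shows "(v, insert j0 (R i)) \<in> r\<^sup>*"
proof -
  obtain F where F: "F \<in> Ei i" "F \<subseteq> v \<or> F \<inter> v = {}" using v unfolding T_def has_def by blast
  obtain j where j: "j \<in> J i" "F = insert j (R i)" using F(1) Ei_eq[OF i] by blast
  have vv: "v \<noteq> {}" "v \<subset> {1..N}" using v unfolding T_def by auto
  have "(v, insert j (R i)) \<in> r\<^sup>*"
  proof (cases "F \<subseteq> v")
    case True
    then show ?thesis using big_adj[OF i j(1) _ vv(2)] j rt_sym by blast
  next
    case False
    then show ?thesis using small[OF i j(1) vv(1) _ vv(2)] F j by blast
  qed
  then show ?thesis using Fj_Fj0[OF i j(1) j0] by (meson rtrancl_trans)
qed

end

context hyp begin

lemma T_cv: "i \<in> I \<Longrightarrow> T i \<subseteq> cverts K"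
  using cv by blast

lemma T_prop: "v \<in> T i \<Longrightarrow> v \<noteq> {} \<and> v \<subset> {1..N} \<and> has i v"
  unfolding T_def by blast

lemma hub_T: "i \<in> I \<Longrightarrow> j \<in> J i \<Longrightarrow> insert j (R i) \<in> T i"
proof -
  assume i: "i \<in> I" and j: "j \<in> J i"
  have "has i (insert j (R i))" by (rule E_has[OF i Fj_props(4)[OF i j]])
  then show ?thesis unfolding T_def using Fj_props(2)[OF i j] by simp
qed

lemma r_cv: "(x, w) \<in> r \<Longrightarrow> w \<in> cverts K"
  unfolding cadj_def cverts_def by blast

lemma T_class:
  assumes i: "i \<in> I" and v: "v \<in> T i"
  shows "r\<^sup>+ `` {v} = T i"
proof
  show "r\<^sup>+ `` {v} \<subseteq> T i"
  proof
    fix w assume "w \<in> r\<^sup>+ `` {v}"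
    then have vw: "(v, w) \<in> r\<^sup>+" by simp
    have h: "has i w" using trancl_has[OF vw i] T_prop[OF v] by blast
    have "w \<in> cverts K" using vw by (induction rule: trancl_induct) (auto intro: r_cv)
    then obtain i' where "i' \<in> I" "w \<in> T i'" using cv by blast
    then show "w \<in> T i" using h T_prop unfolding T_def by blast
  qed
next
  show "T i \<subseteq> r\<^sup>+ `` {v}"
  proof
    fix w assume w: "w \<in> T i"
    obtain j where j: "j \<in> J i" using J_ne[OF i] by blast
    have "(v, insert j (R i)) \<in> r\<^sup>*" using conn[OF i j v] .
    moreover have "(insert j (R i), w) \<in> r\<^sup>*" using rt_sym[OF conn[OF i j w]] .
    ultimately have "(v, w) \<in> r\<^sup>*" by (rule rtrancl_trans)
    moreover have "(v, v) \<in> r" using r_refl T_cv[OF i] v by blast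
    ultimately have "(v, w) \<in> r\<^sup>+" by (meson rtrancl_into_trancl2)
    then show "w \<in> r\<^sup>+ `` {v}" by simp
  qed
qed

lemma comps: "components K = T ` I"
proof -
  have "components K = (\<Union>x\<in>cverts K. {r\<^sup>+ `` {x}})" unfolding components_def quotient_def by simp
  also have "\<dots> = T ` I"
  proof
    show "(\<Union>x\<in>cverts K. {r\<^sup>+ `` {x}}) \<subseteq> T ` I"
      using cv T_class by fastforce
    show "T ` I \<subseteq> (\<Union>x\<in>cverts K. {r\<^sup>+ `` {x}})"
    proof
      fix C assume "C \<in> T ` I"
      then obtain i where i: "i \<in> I" "C = T i" by blast
      obtain j where j: "j \<in> J i" using J_ne[OF i(1)] by blast
      have h: "insert j (R i) \<in> T i" using hub_T[OF i(1) j] .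
      then have "C = r\<^sup>+ `` {insert j (R i)}" using T_class[OF i(1) h] i by simp
      moreover have "insert j (R i) \<in> cverts K" using h T_cv[OF i(1)] by blast
      ultimately show "C \<in> (\<Union>x\<in>cverts K. {r\<^sup>+ `` {x}})" by blast
    qed
  qed
  finally show ?thesis .
qed

lemma inj_T: "inj_on T I"
proof
  fix i i' assume i: "i \<in> I" "i' \<in> I" and eq: "T i = T i'"
  obtain j where j: "j \<in> J i" using J_ne[OF i(1)] by blast
  have h: "insert j (R i) \<in> T i" using hub_T[OF i(1) j] .
  then have h': "insert j (R i) \<in> T i'" using eq by simp
  have p: "insert j (R i) \<noteq> {}" "insert j (R i) \<subset> {1..N}" "has i (insert j (R i))"
    using T_prop[OF h] by auto
  have "has i' (insert j (R i))" using T_prop[OF h'] by auto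
  then show "i = i'" using uniq[OF i p] by simp
qed

lemma card_comps: "card (components K) = card I"
  using comps inj_T by (simp add: card_image)

lemma sphere:
  assumes i: "i \<in> I"
  shows "(\<Union>F\<in>Ei i. cverts (edge_sphere N E F)) = T i"
proof
  show "(\<Union>F\<in>Ei i. cverts (edge_sphere N E F)) \<subseteq> T i"
  proof
    fix v assume "v \<in> (\<Union>F\<in>Ei i. cverts (edge_sphere N E F))"
    then obtain F \<sigma> where F: "F \<in> Ei i" "\<sigma> \<in> K" "diff_contains N \<sigma> F" "v \<in> \<sigma>"
      unfolding cverts_def edge_sphere_def by blast
    have ch: "is_chain_set \<sigma>" "\<forall>D\<in>\<sigma>. D \<subseteq> {1..N}" using F(2) unfolding coloring_complex_def by auto
    have "has i v" using face_sep[OF ch F(3) F(4)] F(1) unfolding has_def by blast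
    then show "v \<in> T i" using K_face[OF F(2) F(4)] unfolding T_def by blast
  qed
next
  show "T i \<subseteq> (\<Union>F\<in>Ei i. cverts (edge_sphere N E F))"
  proof
    fix v assume v: "v \<in> T i"
    then obtain F where F: "F \<in> Ei i" "F \<subseteq> v \<or> F \<inter> v = {}" unfolding T_def has_def by blast
    have FE: "F \<in> E" using F(1) i E_eq by blast
    have F2: "F \<subseteq> v \<or> F \<subseteq> {1..N} - v" using F(2) E_sub[OF FE] by blast
    have ne: "v \<noteq> {}" and ps: "v \<subset> {1..N}" using T_prop[OF v] by auto
    have "{v} \<in> edge_sphere N E F" unfolding edge_sphere_def
      using single_face[OF ne ps FE F2] by simp
    then show "v \<in> (\<Union>F\<in>Ei i. cverts (edge_sphere N E F))" using F(1) unfolding cverts_def by blast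
  qed
qed

lemma card_Ei: "i \<in> I \<Longrightarrow> card (Ei i) = card (J i)"
proof -
  assume i: "i \<in> I"
  have "inj_on (\<lambda>j. insert j (R i)) (J i)"
  proof
    fix x y assume xy: "x \<in> J i" "y \<in> J i" "insert x (R i) = insert y (R i)"
    have "x \<notin> R i" "y \<notin> R i" using xy J_sub[OF i] RB_dis[OF i] by blast+
    then show "x = y" using xy(3) by blast
  qed
  then show ?thesis using Ei_eq[OF i] by (simp add: card_image)
qed

lemma F_in_sphere:
  assumes F: "F \<in> E" shows "F \<in> cverts (edge_sphere N E F)"
proof -
  obtain i where i: "i \<in> I" "F \<in> Ei i" using F E_eq by blast
  obtain j where ij: "j \<in> J i" "F = insert j (R i)" using i(2) Ei_eq[OF i(1)] by blast
  have ne: "F \<noteq> {}" and ps: "F \<subset> {1..N}" using Fj_props(1,2)[OF i(1) ij(1)] ij(2) by simp_all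
  have FF: "F \<subseteq> F \<or> F \<subseteq> {1..N} - F" by simp
  have "{F} \<in> edge_sphere N E F" unfolding edge_sphere_def
    using single_face[OF ne ps F FF] by simp
  then show ?thesis unfolding cverts_def by blast
qed

lemma same:
  assumes F: "F \<in> E" and F': "F' \<in> E"
  shows "same_component K (edge_sphere N E F) (edge_sphere N E F') \<longleftrightarrow>
         (\<exists>i\<in>I. F \<in> Ei i \<and> F' \<in> Ei i)"
proof
  assume "same_component K (edge_sphere N E F) (edge_sphere N E F')"
  then obtain C where C: "C \<in> components K" "cverts (edge_sphere N E F) \<subseteq> C"
    "cverts (edge_sphere N E F') \<subseteq> C" unfolding same_component_def by blast
  obtain i0 where i0: "i0 \<in> I" "C = T i0" using C(1) comps by blast
  have FT: "F \<in> T i0" and FT': "F' \<in> T i0" using C F_in_sphere[OF F] F_in_sphere[OF F'] i0 by blast+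
  obtain i where i: "i \<in> I" "F \<in> Ei i" using F E_eq by blast
  obtain i' where i': "i' \<in> I" "F' \<in> Ei i'" using F' E_eq by blast
  have "i = i0" using uniq[OF i(1) i0(1)] E_has[OF i] T_prop[OF FT] by blast
  moreover have "i' = i0" using uniq[OF i'(1) i0(1)] E_has[OF i'] T_prop[OF FT'] by blast
  ultimately show "\<exists>i\<in>I. F \<in> Ei i \<and> F' \<in> Ei i" using i i' by blast
next
  assume "\<exists>i\<in>I. F \<in> Ei i \<and> F' \<in> Ei i"
  then obtain i where i: "i \<in> I" "F \<in> Ei i" "F' \<in> Ei i" by blast
  have "T i \<in> components K" using comps i(1) by blast
  moreover have "cverts (edge_sphere N E F) \<subseteq> T i" "cverts (edge_sphere N E F') \<subseteq> T i"
    using sphere[OF i(1)] i by blast+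
  ultimately show "same_component K (edge_sphere N E F) (edge_sphere N E F')"
    unfolding same_component_def by blast
qed

end


lemma blk_le:
  fixes k k' A :: nat assumes "k < k'" shows "k * A + A \<le> k' * A"
proof -
  have "Suc k * A \<le> k' * A" using assms by (intro mult_le_mono1) simp
  then show ?thesis by (simp add: add.commute)
qed

theorem mainTheorem15:
  fixes m :: nat and a :: "nat \<Rightarrow> nat" and A :: nat
    and Ei :: "nat \<Rightarrow> nat set set" and E :: "nat set set"
  assumes "m \<ge> 2"
    and "\<forall>i j. 1 \<le> i \<and> i \<le> j \<and> j \<le> m \<longrightarrow> a j \<le> a i"
    and "a m \<ge> 1"
  defines "A \<equiv> max 3 (a 1)"
    and "Ei \<equiv> (\<lambda>i. {{1..(m - i) * A} \<union> {(m - i + 1) * A + 1..m * A} \<union> {j} | j.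
                      (m - i) * A + 1 \<le> j \<and> j \<le> (m - i) * A + a i})"
    and "E \<equiv> (\<Union>i\<in>{1..m}. Ei i)"
  shows "(\<forall>F\<in>E. \<forall>F'\<in>E.
            same_component (coloring_complex (m * A) E)
              (edge_sphere (m * A) E F) (edge_sphere (m * A) E F')
            \<longleftrightarrow> (\<exists>i\<in>{1..m}. F \<in> Ei i \<and> F' \<in> Ei i))
         \<and> card (components (coloring_complex (m * A) E)) = m
         \<and> (\<forall>i\<in>{1..m}. card (Ei i) = a i \<and>
              (\<Union>F\<in>Ei i. cverts (edge_sphere (m * A) E F))
                \<in> components (coloring_complex (m * A) E))"
proof -
  define R where "R = (\<lambda>i. {1..(m - i) * A} \<union> {(m - i + 1) * A + 1..m * A})"
  define Bk where "Bk = (\<lambda>i. {(m - i) * A + 1..(m - i) * A + A})"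
  define J where "J = (\<lambda>i. {(m - i) * A + 1..(m - i) * A + a i})"
  have A3: "A \<ge> 3" unfolding A_def by simp
  have aA: "\<And>i. i \<in> {1..m} \<Longrightarrow> a i \<le> A"
  proof -
    fix i assume "i \<in> {1..m}"
    then have "a i \<le> a 1" using assms(2) by auto
    then show "a i \<le> A" unfolding A_def by simp
  qed
  have a1: "\<And>i. i \<in> {1..m} \<Longrightarrow> a i \<ge> 1"
  proof -
    fix i assume "i \<in> {1..m}"
    then have "a m \<le> a i" using assms(2) by auto
    then show "a i \<ge> 1" using assms(3) by simp
  qed
  have sh: "\<And>i. i \<in> {1..m} \<Longrightarrow> (m - i + 1) * A = (m - i) * A + A"
    by (simp add: algebra_simps)
  have top: "\<And>i. i \<in> {1..m} \<Longrightarrow> (m - i) * A + A \<le> m * A"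
  proof -
    fix i assume i: "i \<in> {1..m}"
    have "(m - i + 1) * A \<le> m * A" using i by (intro mult_le_mono1) auto
    then show "(m - i) * A + A \<le> m * A" using sh[OF i] by simp
  qed
  interpret H: hyp "m * A" "{1..m}" Ei R Bk J E
  proof
    show "E = (\<Union>i\<in>{1..m}. Ei i)" by (simp add: E_def)
  next
    fix i assume i: "i \<in> {1..m}"
    show "Ei i = (\<lambda>j. insert j (R i)) ` J i"
      unfolding Ei_def R_def J_def by auto
    show "R i \<union> Bk i = {1..m * A}"
      unfolding R_def Bk_def using sh[OF i] top[OF i] by auto
    show "R i \<inter> Bk i = {}"
      unfolding R_def Bk_def using sh[OF i] by auto
    show "J i \<subseteq> Bk i" unfolding J_def Bk_def using aA[OF i] by auto
    show "J i \<noteq> {}" unfolding J_def using a1[OF i] by simp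
    show "finite (Bk i)" unfolding Bk_def by simp
    show "card (Bk i) \<ge> 3" unfolding Bk_def using A3 by simp
  next
    fix i i' assume i: "i \<in> {1..m}" "i' \<in> {1..m}" "i \<noteq> i'"
    show "Bk i \<subseteq> R i'"
    proof (cases "i < i'")
      case True
      then have "m - i' < m - i" using i by auto
      then have "(m - i') * A + A \<le> (m - i) * A" by (rule blk_le)
      then show ?thesis unfolding Bk_def R_def using sh[OF i(2)] top[OF i(1)] by auto
    next
      case False
      then have "m - i < m - i'" using i by auto
      then have "(m - i) * A + A \<le> (m - i') * A" by (rule blk_le)
      then show ?thesis unfolding Bk_def R_def by auto
    qed
  next
    show "finite {1..m}" by simp
  qed
  show ?thesis
  proof (intro conjI ballI)
    fix F F' assume "F \<in> E" "F' \<in> E"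
    then show "same_component (coloring_complex (m * A) E)
              (edge_sphere (m * A) E F) (edge_sphere (m * A) E F')
            \<longleftrightarrow> (\<exists>i\<in>{1..m}. F \<in> Ei i \<and> F' \<in> Ei i)" by (rule H.same)
  next
    show "card (components (coloring_complex (m * A) E)) = m" using H.card_comps by simp
  next
    fix i assume i: "i \<in> {1..m}"
    show "card (Ei i) = a i" using H.card_Ei[OF i] unfolding J_def by simp
    show "(\<Union>F\<in>Ei i. cverts (edge_sphere (m * A) E F)) \<in> components (coloring_complex (m * A) E)"
      using H.sphere[OF i] H.comps i by simp
  qed
qed

end
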